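(* Let $\mathbb{F}_q$ be a finite field of characteristic $p$, let $r,v,k,t$ be positive integers, and let $f(x):=x^r h_k(x^v)^t$ where $h_k(x):=x^{k-1}+x^{k-2}+\dots+1$. Let $s:=\gcd(v,q-1)$, $d:=(q-1)/s$ and $e:=v/s$. Then $f$ permutes $\mathbb{F}_q$ if and only if all of the following hold: (1) $\gcd(r,s)=\gcd(d,k)=1$; (2) $\gcd(d,2r+vt(k-1))\le 2$; (3) $k^{st}\equiv (-1)^{(d+1)(r+1)}\pmod{p}$; (4) the function $g(x):=x^r\big((1-x^{ek})/(1-x^e)\big)^{st}$ is injective on $\mu_d\setminus\mu_1$; (5) $(-1)^{(d+1)(r+1)}\notin g(\mu_d\setminus\mu_1)$.
   Context: $\mu_n$ denotes the set of $n$-th roots of unity in $\mathbb{F}_q$ (so $\mu_1=\{1\}$). A polynomial permutes $\mathbb{F}_q$ if the induced map $\mathbb{F}_q\to\mathbb{F}_q$ is a bijection. Note $\gcd(d,e)=1$. *)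

theory Defs
  imports Main "HOL-Library.Cardinality" "HOL-Number_Theory.Cong"
begin

definition roots_unity :: "nat \<Rightarrow> 'a::field set" where
  "roots_unity n = {x. x ^ n = 1}"

definition hpoly :: "nat \<Rightarrow> 'a::field \<Rightarrow> 'a" where
  "hpoly k x = (\<Sum>i<k. x ^ i)"

end

theory Submission
  imports Defs "HOL-Algebra.Multiplicative_Group"
begin


definition tring :: "('a::field) ring"
  where "tring = \<lparr> carrier = UNIV, monoid.mult = (\<lambda>x y. x * y), one = 1,
    ring.zero = 0, add = (\<lambda> x y. x + y) \<rparr>"

lemma field_tring: "field (tring :: ('a::field) ring)"
proof -
  have "\<exists>y. x + y = 0" for x :: 'a
    using add.right_inverse by blast
  moreover have "x \<noteq> 0 \<Longrightarrow> \<exists>y. x * y = 1" for x :: 'a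
    by (rule exI[of _ "inverse x"]) auto
  ultimately show ?thesis
    unfolding tring_def
    by unfold_locales (auto simp:algebra_simps Units_def)
qed

lemma type_pow_eq:
  "x [^]\<^bsub>(tring :: ('a::field) ring)\<^esub> (n::nat) = x ^ n"
  by (induct n) (simp_all add: tring_def mult.commute)

lemma finite_field_gen:
  "\<exists>a::'a::{finite,field}. a \<noteq> 0 \<and> (\<forall>x. x \<noteq> 0 \<longrightarrow> (\<exists>i::nat. x = a ^ i))"
proof -
  define R where "R = (tring :: 'a ring)"
  interpret K: field R unfolding R_def by (rule field_tring)
  have fin: "finite (carrier R)" by simp
  from K.finite_field_mult_group_has_gen[OF fin]
  obtain a where a: "a \<in> carrier (mult_of R)"
     "carrier (mult_of R) = {a [^]\<^bsub>R\<^esub> i | i::nat . i \<in> UNIV}" by blast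
  have "carrier (mult_of R) = UNIV - {0}"
    by (simp add: R_def tring_def)
  then have c: "UNIV - {0} = {a ^ i | i::nat . i \<in> UNIV}"
    using a(2) unfolding R_def type_pow_eq by simp
  have "a \<noteq> 0" using a(1) by (simp add: R_def tring_def)
  moreover have "\<forall>x. x \<noteq> 0 \<longrightarrow> (\<exists>i::nat. x = a ^ i)"
  proof (intro allI impI)
    fix x :: 'a assume "x \<noteq> 0"
    then have "x \<in> UNIV - {0}" by simp
    then show "\<exists>i::nat. x = a ^ i" unfolding c by blast
  qed
  ultimately show ?thesis by blast
qed

lemma power_card_minus1:
  fixes x :: "'a::{finite,field}"
  assumes "x \<noteq> 0"
  shows "x ^ (CARD('a) - 1) = 1"
proof -
  have "(\<Prod>y\<in>UNIV-{0}. x * y) = x ^ card (UNIV - {0::'a}) * \<Prod>(UNIV-{0::'a})"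
    by (simp add: prod.distrib)
  also have "(\<Prod>y\<in>UNIV-{0}. x * y) = (\<Prod>y\<in>UNIV-{0::'a}. y)"
    by (rule prod.reindex_bij_witness[of _ "\<lambda>y. y / x" "\<lambda>y. x * y"]) (use assms in auto)
  finally have "x ^ card (UNIV - {0::'a}) = 1"
    by (metis (no_types, lifting) DiffE finite mult_cancel_right1 prod_zero_iff singletonI)
  moreover have "card (UNIV - {0::'a}) = CARD('a) - 1" by (simp add: card_Diff_singleton)
  ultimately show ?thesis by simp
qed

locale cycf =
  fixes \<gamma> :: "'a::{finite,field}" and N :: nat
  assumes N_def: "N = CARD('a) - 1" and gnz: "\<gamma> \<noteq> 0" and gen: "\<And>x. x \<noteq> 0 \<Longrightarrow> \<exists>i. x = \<gamma> ^ i"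
begin


lemma N_pos: "N > 0"
proof -
  have "card {0::'a, 1} \<le> CARD('a)" by (rule card_mono) auto
  then show ?thesis by (simp add: N_def)
qed

lemma ord: "\<gamma> ^ n = 1 \<longleftrightarrow> N dvd n"
proof
  assume "N dvd n" then show "\<gamma> ^ n = 1"
    using power_card_minus1[OF gnz, folded N_def] by (auto simp: power_mult)
next
  assume h: "\<gamma> ^ n = 1"
  have gN: "\<gamma> ^ N = 1" using power_card_minus1[OF gnz, folded N_def] .
  have pm: "\<gamma> ^ i = \<gamma> ^ (i mod N)" for i
  proof -
    have "\<gamma> ^ i = \<gamma> ^ (N * (i div N)) * \<gamma> ^ (i mod N)" by (simp flip: power_add)
    then show ?thesis by (simp add: power_mult gN)
  qed
  have img: "(\<lambda>i. \<gamma> ^ i) ` {..<N} = UNIV - {0}"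
  proof
    show "(\<lambda>i. \<gamma> ^ i) ` {..<N} \<subseteq> UNIV - {0}" using gnz by auto
    show "UNIV - {0} \<subseteq> (\<lambda>i. \<gamma> ^ i) ` {..<N}"
    proof
      fix x assume "x \<in> (UNIV - {0::'a})"
      then obtain i where "x = \<gamma> ^ i" using gen by blast
      then have "x = \<gamma> ^ (i mod N)" using pm by simp
      moreover have "i mod N < N" using N_pos by simp
      ultimately show "x \<in> (\<lambda>i. \<gamma> ^ i) ` {..<N}" by blast
    qed
  qed
  have "card (UNIV - {0::'a}) = N" by (simp add: card_Diff_singleton N_def)
  then have "inj_on (\<lambda>i. \<gamma> ^ i) {..<N}"
    using img by (simp add: inj_on_iff_eq_card)
  moreover have "\<gamma> ^ (n mod N) = \<gamma> ^ 0" using h pm by simp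
  ultimately have "n mod N = 0"
    using N_pos by (metis inj_onD lessThan_iff mod_less_divisor)
  then show "N dvd n" by auto
qed

lemma nz_pow: "(x::'a) \<noteq> 0 \<Longrightarrow> x ^ N = 1"
  unfolding N_def by (erule power_card_minus1)

end



lemma pow_dvd_one: "(x::'a::monoid_mult) ^ c = 1 \<Longrightarrow> c dvd n \<Longrightarrow> x ^ n = 1"
  by (auto elim!: dvdE simp: power_mult)

lemma gcd_gt1: "\<not> coprime (a::nat) b \<Longrightarrow> b > 0 \<Longrightarrow> gcd a b > 1"
proof -
  assume "\<not> coprime a b" "b > 0"
  then have "gcd a b \<noteq> 1" "gcd a b \<noteq> 0" by (auto simp: coprime_iff_gcd_eq_1)
  then show ?thesis by linarith
qed

lemma hpoly_one: "hpoly k (1::'a::field) = of_nat k"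
  by (simp add: hpoly_def)

lemma hpoly_geom: "y \<noteq> 1 \<Longrightarrow> hpoly k (y::'a::field) = (1 - y ^ k) / (1 - y)"
  by (simp add: hpoly_def sum_gp_strict)

lemma pow_mod_root:
  fixes y :: "'a::field"
  assumes "y ^ d = 1" shows "y ^ n = y ^ (n mod d)"
proof -
  have "y ^ n = y ^ (d * (n div d)) * y ^ (n mod d)" by (simp flip: power_add)
  then show ?thesis by (simp add: power_mult assms)
qed

lemma coprime_pow_bij:
  fixes d a :: nat
  assumes "coprime a d"
  shows "bij_betw (\<lambda>y::'a::field. y ^ a) (roots_unity d) (roots_unity d)"
proof -
  obtain b where b: "[a * b = Suc 0] (mod d)" using cong_solve_coprime_nat[OF assms] by blast
  have inv: "(y ^ a) ^ b = y" if "y ^ d = 1" for y :: 'a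
  proof -
    have "(y ^ a) ^ b = y ^ ((a * b) mod d)" using pow_mod_root[OF that] by (simp add: power_mult)
    also have "(a * b) mod d = Suc 0 mod d" using b by (simp add: cong_def)
    also have "y ^ (Suc 0 mod d) = y" using pow_mod_root[OF that, of "Suc 0"] by simp
    finally show ?thesis .
  qed
  have inv2: "(y ^ b) ^ a = y" if "y ^ d = 1" for y :: 'a
    using inv[OF that] by (simp add: power_mult mult.commute flip: power_mult)
  have m1: "(y ^ a) ^ d = 1" if "y ^ d = 1" for y :: 'a
    using that by (metis power_mult mult.commute power_one)
  have m2: "(y ^ b) ^ d = 1" if "y ^ d = 1" for y :: 'a
    using that by (metis power_mult mult.commute power_one)
  show ?thesis
  proof (rule bij_betw_byWitness[where f'="\<lambda>y. y ^ b"])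
    show "\<forall>y\<in>roots_unity d. (y ^ a) ^ b = (y::'a)" using inv by (simp add: roots_unity_def)
    show "\<forall>y\<in>roots_unity d. (y ^ b) ^ a = (y::'a)" using inv2 by (simp add: roots_unity_def)
    show "(\<lambda>y. y ^ a) ` roots_unity d \<subseteq> (roots_unity d :: 'a set)" using m1 by (auto simp: roots_unity_def)
    show "(\<lambda>y. y ^ b) ` roots_unity d \<subseteq> (roots_unity d :: 'a set)" using m2 by (auto simp: roots_unity_def)
  qed
qed

lemma coprime_pow_ne1:
  fixes y :: "'a::field"
  assumes "coprime a d" "y ^ d = 1" "y \<noteq> 1"
  shows "y ^ a \<noteq> 1"
proof
  assume "y ^ a = 1"
  then have "y ^ a = 1 ^ a" by simp
  moreover have "(1::'a) \<in> roots_unity d" "y \<in> roots_unity d" using assms by (auto simp: roots_unity_def)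
  ultimately show False using inj_onD[OF bij_betw_imp_inj_on[OF coprime_pow_bij[OF assms(1)]], of y 1] assms(3)
    by simp
qed

lemma coprime_pow_bij1:
  fixes d a :: nat
  assumes "coprime a d"
  shows "bij_betw (\<lambda>y::'a::field. y ^ a) (roots_unity d - {1}) (roots_unity d - {1})"
proof -
  have b: "bij_betw (\<lambda>y::'a::field. y ^ a) (roots_unity d) (roots_unity d)"
    by (rule coprime_pow_bij[OF assms])
  have "(\<lambda>y::'a. y ^ a) ` (roots_unity d - {1}) = (\<lambda>y::'a. y ^ a) ` roots_unity d - (\<lambda>y::'a. y ^ a) ` {1}"
    by (rule inj_on_image_set_diff[OF bij_betw_imp_inj_on[OF b]]) (auto simp: roots_unity_def)
  then show ?thesis using b unfolding bij_betw_def by (auto intro: inj_on_subset)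
qed

lemma hpoly_inv:
  fixes z :: "'a::field"
  assumes "z \<noteq> 0" "k > 0"
  shows "hpoly k (inverse z) = inverse z ^ (k - 1) * hpoly k z"
proof -
  have "inverse z ^ (k - 1) * hpoly k z = (\<Sum>i<k. inverse z ^ (k - 1) * z ^ i)"
    by (simp add: hpoly_def sum_distrib_left)
  also have "\<dots> = (\<Sum>i<k. inverse z ^ (k - 1) * z ^ (k - Suc i))"
    by (rule sum.nat_diff_reindex[symmetric])
  also have "\<dots> = (\<Sum>i<k. inverse z ^ i)"
  proof (rule sum.cong)
    fix i assume "i \<in> {..<k}"
    then have "k - 1 = i + (k - Suc i)" by auto
    then have "inverse z ^ (k - 1) * z ^ (k - Suc i) = inverse z ^ i * (inverse z ^ (k - Suc i) * z ^ (k - Suc i))"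
      by (simp add: power_add mult.assoc)
    also have "\<dots> = inverse z ^ i" using assms(1) by (simp flip: power_mult_distrib)
    finally show "inverse z ^ (k - 1) * z ^ (k - Suc i) = inverse z ^ i" .
  qed simp
  finally show ?thesis by (simp add: hpoly_def)
qed


context cycf
begin

lemma pm: "\<gamma> ^ i = \<gamma> ^ (i mod N)"
  using pow_mod_root[of \<gamma> N i] ord by simp

lemma pow_cong: "[i = j] (mod N) \<Longrightarrow> \<gamma> ^ i = \<gamma> ^ j"
  using pm[of i] pm[of j] by (simp add: cong_def)

lemma mu_dvd:
  assumes "c dvd N"
  shows "y ^ c = 1 \<longleftrightarrow> (\<exists>j. y = \<gamma> ^ ((N div c) * j))"
proof
  assume "\<exists>j. y = \<gamma> ^ ((N div c) * j)"
  then obtain j where "y = \<gamma> ^ ((N div c) * j)" by blast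
  then have "y ^ c = \<gamma> ^ (N div c * c * j)" by (simp add: power_mult mult_ac flip: power_mult)
  also have "N div c * c = N" using assms by simp
  finally show "y ^ c = 1" using ord by simp
next
  assume h: "y ^ c = 1"
  have c0: "c > 0" using assms N_pos by (cases c) auto
  have "y \<noteq> 0" using h c0 by (auto simp: power_0_left)
  then obtain i where i: "y = \<gamma> ^ i" using gen by blast
  then have "\<gamma> ^ (i * c) = 1" using h by (simp add: power_mult)
  then have "N dvd i * c" using ord by simp
  then have "(N div c) * c dvd i * c" using assms by simp
  then have "N div c dvd i" using c0 by simp
  then obtain j where "i = N div c * j" by blast
  then show "\<exists>j. y = \<gamma> ^ ((N div c) * j)" using i by blast
qed

lemma pow_s_mu: "N = s * d \<Longrightarrow> (x::'a) \<noteq> 0 \<Longrightarrow> (x ^ s) ^ d = 1"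
  using nz_pow by (simp add: power_mult[symmetric])

lemma mu_surj:
  assumes "N = s * d" "(y::'a) ^ d = 1"
  shows "\<exists>x. x \<noteq> 0 \<and> y = x ^ s"
proof -
  have d0: "d > 0" using assms(1) N_pos by (cases d) auto
  have "N div d = s" using assms(1) d0 by simp
  then obtain j where "y = \<gamma> ^ (s * j)" using mu_dvd[of d y] assms by auto
  then have "y = (\<gamma> ^ j) ^ s" by (simp add: power_mult mult.commute flip: power_mult)
  moreover have "\<gamma> ^ j \<noteq> 0" using gnz by simp
  ultimately show ?thesis by blast
qed

lemma nontriv:
  assumes "c dvd N" "c > 1"
  shows "\<gamma> ^ (N div c) \<noteq> 1" "(\<gamma> ^ (N div c)) ^ c = 1"
proof -
  show "(\<gamma> ^ (N div c)) ^ c = 1" using mu_dvd[OF assms(1)] by (metis mult_1_right)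
  have pos: "N div c > 0" using assms N_pos by (metis dvd_div_eq_0_iff gr0I not_gr0)
  have lt: "N div c < N" using assms N_pos by simp
  show "\<gamma> ^ (N div c) \<noteq> 1"
  proof
    assume "\<gamma> ^ (N div c) = 1"
    then have "N dvd N div c" using ord by simp
    then show False using pos lt by (simp add: nat_dvd_not_less)
  qed
qed

lemma mu_image:
  assumes "N = s * d"
  shows "roots_unity d = (\<lambda>j. \<gamma> ^ (s * j)) ` {..<d}"
proof -
  have d0: "d > 0" using assms(1) N_pos by (cases d) auto
  have s0: "s > 0" using assms(1) N_pos by (cases s) auto
  have ds: "N div d = s" using assms(1) d0 by simp
  show ?thesis
  proof
    show "(\<lambda>j. \<gamma> ^ (s * j)) ` {..<d} \<subseteq> roots_unity d"
      using mu_dvd[of d] ds assms by (auto simp: roots_unity_def)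
    show "roots_unity d \<subseteq> (\<lambda>j. \<gamma> ^ (s * j)) ` {..<d}"
    proof
      fix y :: 'a assume "y \<in> roots_unity d"
      then obtain j where j: "y = \<gamma> ^ (s * j)" using mu_dvd[of d y] ds assms by (auto simp: roots_unity_def)
      have "[s * j = s * (j mod d)] (mod N)"
        unfolding assms cong_def by (simp add: mod_mult_mult1)
      then have "y = \<gamma> ^ (s * (j mod d))" using j pow_cong by blast
      moreover have "j mod d < d" using d0 by simp
      ultimately show "y \<in> (\<lambda>j. \<gamma> ^ (s * j)) ` {..<d}" by blast
    qed
  qed
qed

lemma mu_inj:
  assumes "N = s * d"
  shows "inj_on (\<lambda>j. \<gamma> ^ (s * j)) {..<d}"
proof -
  have s0: "s > 0" using assms(1) N_pos by (cases s) auto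
  have *: "i = j" if "i \<le> j" "j < d" "\<gamma> ^ (s * i) = \<gamma> ^ (s * j)" for i j
  proof -
    have "\<gamma> ^ (s * j) = \<gamma> ^ (s * i) * \<gamma> ^ (s * (j - i))"
      using that(1) by (simp flip: power_add add: diff_mult_distrib2)
    then have "\<gamma> ^ (s * (j - i)) = 1" using that(3) gnz by simp
    then have "s * d dvd s * (j - i)" using ord assms by simp
    then have "d dvd j - i" using s0 by simp
    show "i = j"
    proof (rule ccontr)
      assume "i \<noteq> j"
      then have "0 < j - i" using that(1) by simp
      then have "d \<le> j - i" using \<open>d dvd j - i\<close> by (rule dvd_imp_le[rotated])
      then show False using that(2) by simp
    qed
  qed
  show ?thesis
    by (rule inj_onI) (metis * lessThan_iff nat_le_linear)
qed


lemma gauss2: "2 * (\<Sum>j<d. j) = d * (d - 1::nat)"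
proof (induct d)
  case 0 show ?case by simp
next
  case (Suc d)
  have "2 * (\<Sum>j<Suc d. j) = d * (d - 1) + 2 * d" using Suc by simp
  then show ?case by (cases d) (simp_all add: algebra_simps)
qed

lemma prod_mu:
  assumes "N = s * d"
  shows "\<Prod>(roots_unity d :: 'a set) = (-1) ^ (d + 1)"
proof -
  have d0: "d > 0" using assms(1) N_pos by (cases d) auto
  have s0: "s > 0" using assms(1) N_pos by (cases s) auto
  have "\<Prod>(roots_unity d) = (\<Prod>j<d. \<gamma> ^ (s * j))"
    unfolding mu_image[OF assms] by (rule prod.reindex[OF mu_inj[OF assms], unfolded comp_def])
  also have "\<dots> = \<gamma> ^ (\<Sum>j<d. s * j)" by (simp add: power_sum)
  also have "(\<Sum>j<d. s * j) = s * (\<Sum>j<d. j)" by (simp add: sum_distrib_left)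
  finally have P: "\<Prod>(roots_unity d) = \<gamma> ^ (s * (\<Sum>j<d. j))" .
  show ?thesis
  proof (cases "even d")
    case True
    then obtain m where m: "d = 2 * m" by blast
    have m0: "m > 0" using d0 m by simp
    have "2 * (\<Sum>j<d. j) = 2 * (m * (2 * m - 1))" using gauss2[of d] m by simp
    then have S: "(\<Sum>j<d. j) = m * (2 * m - 1)" by linarith
    define z where "z = \<gamma> ^ (s * m)"
    have z2: "z ^ 2 = 1" unfolding z_def using ord assms m
      by (simp add: power_mult[symmetric] mult_ac)
    have z1: "z \<noteq> 1"
    proof
      assume "z = 1"
      then have "N dvd s * m" using ord z_def by simp
      moreover have "0 < s * m" "s * m < N" using s0 m0 assms m by auto
      ultimately show False by (simp add: nat_dvd_not_less)
    qed
    have "(z - 1) * (z + 1) = 0" using z2 by (simp add: algebra_simps power2_eq_square)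
    then have zm: "z = -1" using z1 by (simp add: eq_neg_iff_add_eq_0)
    have "\<Prod>(roots_unity d) = z ^ (2 * m - 1)" unfolding P S z_def
      by (simp add: power_mult mult.assoc)
    also have "\<dots> = -1" using zm m0 by (simp add: power_minus_odd)
    finally show ?thesis using m by simp
  next
    case False
    then obtain m where m: "d = 2 * m + 1" using oddE by blast
    have "2 * (\<Sum>j<d. j) = 2 * (m * d)" using gauss2[of d] m by simp
    then have S: "(\<Sum>j<d. j) = m * d" by linarith
    have "\<Prod>(roots_unity d) = (\<gamma> ^ N) ^ m" unfolding P S assms
      by (simp add: power_mult[symmetric] mult_ac)
    moreover have "\<gamma> ^ N = 1" using ord by simp
    ultimately show ?thesis using m by simp
  qed
qed


lemma step1:
  fixes H :: "'a \<Rightarrow> 'a" and f :: "'a \<Rightarrow> 'a"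
  assumes Nsd: "N = s * d" and r0: "r > 0"
    and fdef: "\<And>x. f x = x ^ r * H (x ^ s)"
  shows "inj f \<longleftrightarrow> coprime r s \<and> (\<forall>y\<in>roots_unity d. H y \<noteq> 0)
            \<and> inj_on (\<lambda>y. y ^ r * H y ^ s) (roots_unity d)"
proof -
  have d0: "d > 0" using Nsd N_pos by (cases d) auto
  have s0: "s > 0" using Nsd N_pos by (cases s) auto
  have Nds: "N div s = d" "N div d = s" using Nsd d0 s0 by auto
  have f0: "f 0 = 0" using r0 fdef by simp
  have fs: "f x ^ s = (x ^ s) ^ r * H (x ^ s) ^ s" for x
    by (simp add: fdef power_mult_distrib mult_ac flip: power_mult)
  show ?thesis
  proof
    assume inj: "inj f"
    have Hnz: "\<forall>y\<in>roots_unity d. H y \<noteq> 0"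
    proof
      fix y :: 'a assume "y \<in> roots_unity d"
      then obtain x where x: "x \<noteq> 0" "y = x ^ s" using mu_surj[OF Nsd] by (auto simp: roots_unity_def)
      show "H y \<noteq> 0"
      proof
        assume "H y = 0"
        then have "f x = f 0" using x fdef f0 by simp
        then show False using inj x by (auto dest: injD)
      qed
    qed
    have cop: "coprime r s"
    proof (rule ccontr)
      assume nc: "\<not> coprime r s"
      define c where "c = gcd r s"
      have c1: "c > 1" using gcd_gt1[OF nc s0] unfolding c_def .
      have cN: "c dvd N" unfolding c_def Nsd by simp
      define z where "z = \<gamma> ^ (N div c)"
      have z1: "z \<noteq> 1" and zc: "z ^ c = 1" using nontriv[OF cN c1] z_def by auto
      have zr: "z ^ r = 1" using zc unfolding c_def
        by (rule pow_dvd_one) (rule gcd_dvd1)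
      have zs: "z ^ s = 1" using zc unfolding c_def
        by (rule pow_dvd_one) (rule gcd_dvd2)
      have "f z = f 1" using zr zs fdef by simp
      then show False using inj z1 by (auto dest: injD)
    qed
    have inj2: "inj_on (\<lambda>y. y ^ r * H y ^ s) (roots_unity d)"
    proof (rule inj_onI)
      fix y1 y2 :: 'a assume y: "y1 \<in> roots_unity d" "y2 \<in> roots_unity d"
        and eq: "y1 ^ r * H y1 ^ s = y2 ^ r * H y2 ^ s"
      obtain x1 where x1: "x1 \<noteq> 0" "y1 = x1 ^ s" using mu_surj[OF Nsd] y(1) by (auto simp: roots_unity_def)
      obtain x2 where x2: "x2 \<noteq> 0" "y2 = x2 ^ s" using mu_surj[OF Nsd] y(2) by (auto simp: roots_unity_def)
      have fx2: "f x2 \<noteq> 0" using x2 Hnz y(2) fdef by simp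
      have "f x1 ^ s = f x2 ^ s" using fs eq x1 x2 by simp
      define w where "w = f x1 / f x2"
      have "w ^ s = 1" using \<open>f x1 ^ s = f x2 ^ s\<close> fx2 by (simp add: w_def power_divide)
      then obtain j where j: "w = \<gamma> ^ (d * j)" using mu_dvd[of s w] Nds Nsd by auto
      obtain b where b: "[r * b = Suc 0] (mod s)" using cong_solve_coprime_nat[OF cop] by blast
      define om where "om = \<gamma> ^ (d * (b * j))"
      have "[d * (b * j) * r = d * j] (mod N)"
      proof -
        have "[r * b * j = Suc 0 * j] (mod s)" using b by (rule cong_mult) simp
        then have "[d * (r * b * j) = d * j] (mod d * s)"
          by (simp add: cong_def mod_mult_mult1)
        then show ?thesis using Nsd by (simp add: mult_ac)
      qed
      then have omr: "om ^ r = w" unfolding om_def j by (simp add: power_mult[symmetric] pow_cong)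
      have oms: "om ^ s = 1" unfolding om_def using ord Nsd
        by (simp add: power_mult[symmetric] mult_ac)
      have "f (om * x2) = om ^ r * f x2" using oms fdef
        by (simp add: power_mult_distrib mult_ac)
      also have "\<dots> = f x1" using omr fx2 w_def by simp
      finally have "om * x2 = x1" using inj by (auto dest: injD)
      then show "y1 = y2" using x1 x2 oms by (auto simp: power_mult_distrib)
    qed
    show "coprime r s \<and> (\<forall>y\<in>roots_unity d. H y \<noteq> 0) \<and> inj_on (\<lambda>y. y ^ r * H y ^ s) (roots_unity d)"
      using cop Hnz inj2 by blast
  next
    assume "coprime r s \<and> (\<forall>y\<in>roots_unity d. H y \<noteq> 0) \<and> inj_on (\<lambda>y. y ^ r * H y ^ s) (roots_unity d)"
    then have cop: "coprime r s" and Hnz: "\<And>y. y \<in> roots_unity d \<Longrightarrow> H y \<noteq> 0"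
      and inj2: "inj_on (\<lambda>y. y ^ r * H y ^ s) (roots_unity d)" by auto
    have mu: "x ^ s \<in> roots_unity d" if "x \<noteq> 0" for x :: 'a
      using pow_s_mu[OF Nsd that] by (simp add: roots_unity_def)
    have fnz: "f x \<noteq> 0" if "x \<noteq> 0" for x :: 'a
      using Hnz[OF mu[OF that]] that fdef by simp
    show "inj f"
    proof (rule injI)
      fix x1 x2 assume eq: "f x1 = f x2"
      show "x1 = x2"
      proof (cases "x1 = 0 \<or> x2 = 0")
        case True
        then show ?thesis using eq f0 fnz by metis
      next
        case False
        then have nz: "x1 \<noteq> 0" "x2 \<noteq> 0" by auto
        have "(x1 ^ s) ^ r * H (x1 ^ s) ^ s = (x2 ^ s) ^ r * H (x2 ^ s) ^ s"
          using fs[of x1] fs[of x2] eq by simp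
        then have xs: "x1 ^ s = x2 ^ s" using inj2 mu nz by (auto dest: inj_onD)
        define w where "w = x1 / x2"
        have ws: "w ^ s = 1" using xs nz by (simp add: w_def power_divide)
        have "f x1 = w ^ r * f x2" using xs nz fdef by (simp add: w_def power_divide)
        then have wr: "w ^ r = 1" using eq fnz[OF nz(2)] by simp
        obtain j where j: "w = \<gamma> ^ (d * j)" using mu_dvd[of s w] Nds Nsd ws by auto
        have "N dvd d * j * r" using wr j ord by (simp add: power_mult[symmetric])
        then have "s dvd j * r" using Nsd d0 by (simp add: mult.assoc)
        then have "s dvd j" using cop by (metis coprime_commute coprime_dvd_mult_left_iff)
        then have "N dvd d * j" using Nsd by simp
        then have "w = 1" using j ord by simp
        then show ?thesis using nz w_def by simp
      qed
    qed
  qed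
qed


lemma step2:
  assumes Nsd: "N = s * d" and ced: "coprime e d"
  shows "(\<forall>y\<in>(roots_unity d :: 'a set). hpoly k (y ^ e) \<noteq> 0) \<longleftrightarrow> of_nat k \<noteq> (0::'a) \<and> coprime d k"
proof
  assume H: "\<forall>y\<in>(roots_unity d :: 'a set). hpoly k (y ^ e) \<noteq> 0"
  have "hpoly k ((1::'a) ^ e) \<noteq> 0" using bspec[OF H, of 1] by (simp add: roots_unity_def)
  then have k0: "of_nat k \<noteq> (0::'a)" by (simp add: hpoly_one)
  have "coprime d k"
  proof (rule ccontr)
    assume nc: "\<not> coprime d k"
    have d0: "d > 0" using Nsd N_pos by (cases d) auto
    define c where "c = gcd d k"
    have "c \<noteq> 1" "c \<noteq> 0" using nc d0 by (auto simp: c_def coprime_iff_gcd_eq_1)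
    then have c1: "c > 1" by linarith
    have cN: "c dvd N" unfolding c_def Nsd by simp
    define z where "z = \<gamma> ^ (N div c)"
    have z1: "z \<noteq> 1" and zc: "z ^ c = 1" using nontriv[OF cN c1] z_def by auto
    have zd: "z ^ d = 1" using zc unfolding c_def
      by (rule pow_dvd_one) (rule gcd_dvd1)
    have zk: "z ^ k = 1" using zc unfolding c_def
      by (rule pow_dvd_one) (rule gcd_dvd2)
    have ze: "z ^ e \<noteq> 1" using coprime_pow_ne1[OF ced zd z1] .
    have "(z ^ e) ^ k = (z ^ k) ^ e" by (simp flip: power_mult add: mult.commute)
    then have zek: "(z ^ e) ^ k = 1" using zk by simp
    have "hpoly k (z ^ e) = 0" using ze zek by (simp add: hpoly_geom)
    moreover have "z \<in> roots_unity d" using zd by (simp add: roots_unity_def)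
    ultimately show False using H by blast
  qed
  then show "of_nat k \<noteq> (0::'a) \<and> coprime d k" using k0 by blast
next
  assume "of_nat k \<noteq> (0::'a) \<and> coprime d k"
  then have k0: "of_nat k \<noteq> (0::'a)" and cdk: "coprime d k" by auto
  show "\<forall>y\<in>(roots_unity d :: 'a set). hpoly k (y ^ e) \<noteq> 0"
  proof
    fix y :: 'a assume y: "y \<in> roots_unity d"
    show "hpoly k (y ^ e) \<noteq> 0"
    proof (cases "y = 1")
      case True then show ?thesis using k0 by (simp add: hpoly_one)
    next
      case False
      have yd: "y ^ d = 1" using y by (simp add: roots_unity_def)
      have ye: "y ^ e \<noteq> 1" using coprime_pow_ne1[OF ced yd False] .
      have "coprime (e * k) d" using ced cdk by (simp add: coprime_commute)
      then have yek: "y ^ (e * k) \<noteq> 1" using coprime_pow_ne1[OF _ yd False] by blast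
      show ?thesis using ye yek by (simp add: hpoly_geom power_mult)
    qed
  qed
qed

lemma prod_hpoly:
  assumes d0: "d > 0" and cdk: "coprime d k"
  shows "(\<Prod>y\<in>roots_unity d. hpoly k y) = (of_nat k :: 'a)"
proof -
  define A where "A = roots_unity d - {1::'a}"
  have fin: "finite A" by simp
  have R: "roots_unity d = insert (1::'a) A" unfolding A_def by (auto simp: roots_unity_def)
  have "(\<Prod>y\<in>roots_unity d. hpoly k y) = of_nat k * (\<Prod>y\<in>A. hpoly k y)"
  proof -
    have "1 \<notin> A" by (simp add: A_def)
    then show ?thesis unfolding R using fin by (simp add: hpoly_one)
  qed
  moreover have "(\<Prod>y\<in>A. hpoly k y) = 1"
  proof -
    have "(\<Prod>y\<in>A. hpoly k y) * (\<Prod>y\<in>A. 1 - y) = (\<Prod>y\<in>A. 1 - y ^ k)"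
      unfolding prod.distrib[symmetric] by (rule prod.cong) (auto simp: A_def hpoly_geom)
    also have "(\<Prod>y\<in>A. 1 - y ^ k) = (\<Prod>y\<in>A. 1 - y)"
      using prod.reindex_bij_betw[OF coprime_pow_bij1[of k d], of "\<lambda>y. 1 - y"] cdk
      by (simp add: A_def coprime_commute)
    finally show ?thesis
      by (metis (no_types, lifting) A_def DiffD2 fin mult_cancel_right2 prod_zero_iff right_minus_eq singletonI)
  qed
  ultimately show ?thesis by simp
qed

lemma step5:
  assumes Nsd: "N = s * d" and ced: "coprime e d" and cdk: "coprime d k"
    and Hnz: "\<forall>y\<in>(roots_unity d :: 'a set). hpoly k (y ^ e) \<noteq> 0"
    and inj: "inj_on (\<lambda>y. y ^ r * (hpoly k (y ^ e) ^ t) ^ s) (roots_unity d :: 'a set)"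
  shows "(of_nat k :: 'a) ^ (s * t) = (-1) ^ ((d + 1) * (r + 1))"
proof -
  have d0: "d > 0" using Nsd N_pos by (cases d) auto
  define \<phi> where "\<phi> = (\<lambda>y::'a. y ^ r * (hpoly k (y ^ e) ^ t) ^ s)"
  have maps: "\<phi> ` roots_unity d \<subseteq> roots_unity d"
  proof
    fix z :: 'a assume "z \<in> \<phi> ` roots_unity d"
    then obtain y where y: "y \<in> roots_unity d" "z = \<phi> y" by blast
    have yd: "y ^ d = 1" using y by (simp add: roots_unity_def)
    have "z ^ d = (y ^ d) ^ r * (hpoly k (y ^ e) ^ N) ^ t"
      unfolding y(2) \<phi>_def Nsd by (simp add: power_mult_distrib mult_ac flip: power_mult)
    also have "\<dots> = 1" using yd nz_pow Hnz y(1) by simp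
    finally show "z \<in> roots_unity d" by (simp add: roots_unity_def)
  qed
  have "card (\<phi> ` roots_unity d) = card (roots_unity d :: 'a set)"
    using inj unfolding \<phi>_def by (simp add: card_image)
  then have img: "\<phi> ` roots_unity d = roots_unity d"
    using maps by (simp add: card_subset_eq)
  have "\<Prod>(roots_unity d) = (\<Prod>y\<in>roots_unity d. \<phi> y)"
    using prod.reindex[of \<phi> "roots_unity d" id] inj img unfolding \<phi>_def by simp
  also have "\<dots> = \<Prod>(roots_unity d) ^ r * ((\<Prod>y\<in>roots_unity d. hpoly k (y ^ e)) ^ t) ^ s"
    by (simp add: \<phi>_def prod.distrib prod_power_distrib)
  also have "(\<Prod>y\<in>(roots_unity d :: 'a set). hpoly k (y ^ e)) = (\<Prod>y\<in>(roots_unity d :: 'a set). hpoly k y)"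
    using prod.reindex_bij_betw[OF coprime_pow_bij[OF ced], of "hpoly k"] .
  also have "\<dots> = of_nat k" using prod_hpoly[OF d0 cdk] .
  finally have eq0: "\<Prod>(roots_unity d :: 'a set) = \<Prod>(roots_unity d :: 'a set) ^ r * ((of_nat k :: 'a) ^ t) ^ s" .
  have kk: "((of_nat k :: 'a) ^ t) ^ s = of_nat k ^ (s * t)" by (metis mult.commute power_mult)
  have eq: "(-1) ^ (d + 1) = ((-1) ^ (d + 1)) ^ r * (of_nat k :: 'a) ^ (s * t)"
    using eq0 unfolding kk prod_mu[OF Nsd] .
  have sq: "((-1::'a) ^ (d + 1)) ^ r * ((-1) ^ (d + 1)) ^ r = 1"
  proof -
    have ww: "(-1::'a) ^ n * (-1) ^ n = 1" for n :: nat by (induct n) auto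
    have "((-1::'a) ^ (d + 1)) ^ r * ((-1) ^ (d + 1)) ^ r = ((-1::'a) ^ (d + 1) * (-1) ^ (d + 1)) ^ r"
      by (simp only: power_mult_distrib)
    then show ?thesis using ww by simp
  qed
  have "(of_nat k :: 'a) ^ (s * t) = ((-1) ^ (d + 1)) ^ r * ((-1) ^ (d + 1))"
    using arg_cong[OF eq, of "\<lambda>z. ((-1) ^ (d + 1)) ^ r * z"] sq
    by (simp add: mult.assoc[symmetric])
  also have "\<dots> = (-1) ^ ((d + 1) * (r + 1))" by (simp only: power_mult Suc_eq_plus1[symmetric] power_Suc2)
  finally show ?thesis .
qed

lemma step6:
  assumes Nsd: "N = s * d" and k0: "k > 0"
    and inj: "inj_on (\<lambda>y. y ^ r * (hpoly k (y ^ e) ^ t) ^ s) (roots_unity d :: 'a set)"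
  shows "gcd d (2 * r + s * e * t * (k - 1)) \<le> 2"
proof (rule ccontr)
  define m where "m = 2 * r + s * e * t * (k - 1)"
  define c where "c = gcd d m"
  assume "\<not> gcd d (2 * r + s * e * t * (k - 1)) \<le> 2"
  then have c2: "c > 2" unfolding c_def m_def by simp
  have cN: "c dvd N" unfolding c_def Nsd by simp
  define z where "z = \<gamma> ^ (N div c)"
  have zc: "z ^ c = 1" using nontriv[OF cN] c2 z_def by auto
  have zd: "z ^ d = 1" using zc unfolding c_def
    by (rule pow_dvd_one) (rule gcd_dvd1)
  have zm: "z ^ m = 1" using zc unfolding c_def
    by (rule pow_dvd_one) (rule gcd_dvd2)
  have z0: "z \<noteq> 0" using zc c2 by (metis zero_power gr_zeroI not_numeral_less_zero zero_neq_one) 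
  define \<phi> where "\<phi> = (\<lambda>y::'a. y ^ r * (hpoly k (y ^ e) ^ t) ^ s)"
  define P where "P = (hpoly k (z ^ e) ^ t) ^ s"
  define X where "X = e * (k - 1) * t * s"
  have mX: "m = 2 * r + X" unfolding m_def X_def by (simp add: mult_ac)
  have "\<phi> (inverse z) = inverse z ^ r * ((inverse (z ^ e) ^ (k - 1) * hpoly k (z ^ e)) ^ t) ^ s"
    unfolding \<phi>_def using hpoly_inv[of "z ^ e" k] z0 k0 by (simp add: power_inverse)
  also have "\<dots> = inverse z ^ r * inverse z ^ X * P"
    unfolding P_def X_def by (simp add: power_mult_distrib power_inverse mult_ac flip: power_mult)
  also have "\<dots> = z ^ r * P"
  proof -
    have "z ^ r * z ^ r * z ^ X = 1" using zm mX by (simp flip: power_add add: mult_2)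
    then have "inverse z ^ r * inverse z ^ X = z ^ r" using z0
      by (simp add: power_inverse field_simps)
    then show ?thesis by simp
  qed
  also have "\<dots> = \<phi> z" unfolding \<phi>_def P_def ..
  finally have eq: "\<phi> (inverse z) = \<phi> z" .
  have "inverse z \<in> roots_unity d" "z \<in> roots_unity d" using zd by (auto simp: roots_unity_def power_inverse)
  then have "inverse z = z" using inj eq unfolding \<phi>_def by (auto dest: inj_onD)
  then have "z ^ 2 = 1" using z0 by (metis power2_eq_square right_inverse)
  then have "N dvd N div c * 2" unfolding z_def using ord by (simp add: power_mult[symmetric])
  moreover have "0 < N div c * 2" "N div c * 2 < N"
  proof -
    have "N = N div c * c" using cN by simp
    moreover have "N div c > 0" using cN N_pos c2 by (metis dvd_div_eq_0_iff gr0I not_gr0 mult_0)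
    moreover have "N div c * 2 < N div c * c" using c2 \<open>N div c > 0\<close> by simp
    ultimately show "0 < N div c * 2" "N div c * 2 < N" by linarith+
  qed
  ultimately show False by (simp add: nat_dvd_not_less)
qed

end

theorem proposition3p2:
  fixes r v k t :: nat
    and f g :: "'a::{finite,field} \<Rightarrow> 'a"
    and p q s d e :: nat
  assumes "r > 0" "v > 0" "k > 0" "t > 0"
    and "q = CARD('a)" "p = CHAR('a)"
    and "\<And>x. f x = x ^ r * (hpoly k (x ^ v)) ^ t"
    and "s = gcd v (q - 1)" "d = (q - 1) div s" "e = v div s"
    and "\<And>x. g x = x ^ r * ((1 - x ^ (e * k)) / (1 - x ^ e)) ^ (s * t)"
  shows "bij f \<longleftrightarrow>
    (gcd r s = 1 \<and> gcd d k = 1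
     \<and> gcd d (2 * r + v * t * (k - 1)) \<le> 2
     \<and> [int k ^ (s * t) = (-1) ^ ((d + 1) * (r + 1))] (mod int p)
     \<and> inj_on g (roots_unity d - roots_unity 1)
     \<and> (-1) ^ ((d + 1) * (r + 1)) \<notin> g ` (roots_unity d - roots_unity 1))"
proof -
  note r0 = assms(1) and v0 = assms(2) and k0 = assms(3) and t0 = assms(4)
  note fdef = assms(7) and gdef = assms(11)
  obtain \<gamma> :: 'a where \<gamma>: "\<gamma> \<noteq> 0" "\<And>x. x \<noteq> 0 \<Longrightarrow> \<exists>i. x = \<gamma> ^ i"
    using finite_field_gen by blast
  define N where "N = CARD('a) - 1"
  interpret cycf \<gamma> N using \<gamma> N_def by unfold_locales auto
  have qN: "q - 1 = N" using assms(5) N_def by simp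
  have s0: "s > 0" using assms(8) v0 by simp
  have Nsd: "N = s * d" using assms(8,9) qN by simp
  have vse: "v = s * e" using assms(8,10) by simp
  have ced: "coprime e d" using assms(8,9,10) qN v0 by (simp add: div_gcd_coprime)
  have d0: "d > 0" using Nsd N_pos by (cases d) auto
  define H where "H = (\<lambda>y::'a. hpoly k (y ^ e) ^ t)"
  define \<phi> where "\<phi> = (\<lambda>y::'a. y ^ r * H y ^ s)"
  have fH: "\<And>x. f x = x ^ r * H (x ^ s)"
    using fdef vse by (simp add: H_def power_mult)
  have bij_inj: "bij f \<longleftrightarrow> inj f"
    using finite_UNIV_inj_surj[of f] by (auto simp: bij_def)
  have S1: "inj f \<longleftrightarrow> coprime r s \<and> (\<forall>y\<in>roots_unity d. H y \<noteq> 0) \<and> inj_on \<phi> (roots_unity d)"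
    unfolding \<phi>_def by (rule step1[OF Nsd r0 fH])
  have HH: "(\<forall>y\<in>(roots_unity d :: 'a set). H y \<noteq> 0) \<longleftrightarrow> (\<forall>y\<in>(roots_unity d :: 'a set). hpoly k (y ^ e) \<noteq> 0)"
    using t0 by (simp add: H_def)
  note S2 = step2[OF Nsd ced, of k]
  define A :: "'a set" where "A = roots_unity d - roots_unity 1"
  have A1: "A = roots_unity d - {1}" by (auto simp: A_def roots_unity_def)
  have R: "roots_unity d = insert (1::'a) A" unfolding A1 by (auto simp: roots_unity_def)
  have phig: "\<phi> y = g y" if "y \<in> A" for y
  proof -
    have yd: "y ^ d = 1" "y \<noteq> 1" using that by (auto simp: A1 roots_unity_def)
    have ye: "y ^ e \<noteq> 1" using coprime_pow_ne1[OF ced yd] .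
    show ?thesis unfolding \<phi>_def H_def gdef using ye
      by (simp add: hpoly_geom power_mult[symmetric] mult.commute)
  qed
  have phi1: "\<phi> 1 = (of_nat k) ^ (s * t)"
    unfolding \<phi>_def H_def by (simp add: hpoly_one power_mult[symmetric] mult.commute)
  have injeq: "inj_on \<phi> (roots_unity d) \<longleftrightarrow> inj_on g A \<and> \<phi> 1 \<notin> g ` A"
  proof -
    have "1 \<notin> A" by (simp add: A1)
    then have "inj_on \<phi> (roots_unity d) \<longleftrightarrow> inj_on \<phi> A \<and> \<phi> 1 \<notin> \<phi> ` A"
      unfolding R by simp
    also have "inj_on \<phi> A \<longleftrightarrow> inj_on g A" using phig by (rule inj_on_cong)
    also have "\<phi> ` A = g ` A" using phig by (rule image_cong[OF refl])
    finally show ?thesis .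
  qed
  define \<epsilon> :: 'a where "\<epsilon> = (-1) ^ ((d + 1) * (r + 1))"
  have cong_iff: "[int k ^ (s * t) = (-1) ^ ((d + 1) * (r + 1))] (mod int p) \<longleftrightarrow> (of_nat k :: 'a) ^ (s * t) = \<epsilon>"
    unfolding assms(6) \<epsilon>_def of_int_eq_iff_cong_CHAR[symmetric] by simp
  have eps0: "\<epsilon> \<noteq> 0" unfolding \<epsilon>_def by simp
  have vt: "v * t * (k - 1) = s * e * t * (k - 1)" using vse by simp
  show ?thesis
  proof
    assume "bij f"
    then have cop: "coprime r s" and Hnz: "\<forall>y\<in>(roots_unity d :: 'a set). hpoly k (y ^ e) \<noteq> 0"
      and inj: "inj_on \<phi> (roots_unity d)" using bij_inj S1 HH by auto
    have cdk: "coprime d k" using Hnz S2 by blast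
    have K: "(of_nat k :: 'a) ^ (s * t) = \<epsilon>"
      unfolding \<epsilon>_def using step5[OF Nsd ced cdk Hnz, of r t] inj unfolding \<phi>_def H_def by blast
    have G: "gcd d (2 * r + v * t * (k - 1)) \<le> 2"
      unfolding vt using step6[OF Nsd k0, of r e t] inj unfolding \<phi>_def H_def by blast
    show "gcd r s = 1 \<and> gcd d k = 1
     \<and> gcd d (2 * r + v * t * (k - 1)) \<le> 2
     \<and> [int k ^ (s * t) = (-1) ^ ((d + 1) * (r + 1))] (mod int p)
     \<and> inj_on g (roots_unity d - roots_unity 1)
     \<and> (-1) ^ ((d + 1) * (r + 1)) \<notin> g ` (roots_unity d - roots_unity 1)"
      using cop cdk G K cong_iff inj injeq phi1 unfolding A_def \<epsilon>_def
      by (simp add: coprime_iff_gcd_eq_1)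
  next
    assume h: "gcd r s = 1 \<and> gcd d k = 1
     \<and> gcd d (2 * r + v * t * (k - 1)) \<le> 2
     \<and> [int k ^ (s * t) = (-1) ^ ((d + 1) * (r + 1))] (mod int p)
     \<and> inj_on g (roots_unity d - roots_unity 1)
     \<and> (-1) ^ ((d + 1) * (r + 1)) \<notin> g ` (roots_unity d - roots_unity 1)"
    then have cop: "coprime r s" and cdk: "coprime d k"
      and K: "(of_nat k :: 'a) ^ (s * t) = \<epsilon>"
      and ig: "inj_on g A" and ni: "\<epsilon> \<notin> g ` A"
      using cong_iff unfolding A_def \<epsilon>_def by (auto simp: coprime_iff_gcd_eq_1)
    have kn0: "(of_nat k :: 'a) \<noteq> 0" using K eps0 s0 t0 by auto
    have Hnz: "\<forall>y\<in>roots_unity d. H y \<noteq> 0" using HH S2 kn0 cdk by blast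
    have "inj_on \<phi> (roots_unity d)" using injeq ig ni phi1 K by simp
    then show "bij f" using bij_inj S1 cop Hnz by blast
  qed
qed

end
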